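(* Let $\{x^k\}_k$, $\{z^k\}_k$ be generated by the normal map-based stochastic proximal gradient method described in the context. Then for all integers $0\le m<n$ and every sample $\omega$ with $L(\omega)<\infty$, writing $\tau=\tau_{m,n}$ and $e=e^{m,n}$, \begin{align*} \|F^\lambda_{\mathrm{nor}}(z^n)\|^2&\le\Big(1-\frac{\tau}{\lambda}\Big)^2\|F^\lambda_{\mathrm{nor}}(z^m)\|^2+\Big(L^2+\frac{2L}{\lambda}+\frac1{\lambda^2}\Big)\|x^n-x^m\|^2+\frac{1}{\lambda^2}\|e\|^2\\ &\quad+\frac2\lambda\Big(1-\frac\tau\lambda\Big)\big\langle F^\lambda_{\mathrm{nor}}(z^m),\lambda(\nabla f(x^n)-\nabla f(x^m))-(x^n-x^m)+e\big\rangle\\ &\quad+\frac2\lambda\langle\nabla f(x^n)-\nabla f(x^m),e\rangle-\frac{2}{\lambda^2}\langle e,x^n-x^m\rangle. \end{align*}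
   Context: Let $\varphi:\mathbb{R}^d\to(-\infty,\infty]$ be convex, lower semicontinuous and proper, let $f:\mathbb{R}^d\to\mathbb{R}$ be continuously differentiable on an open set containing $\mathrm{dom}\,\varphi$, and set $\psi=f+\varphi$. For $\lambda>0$ let $\mathrm{prox}_{\lambda\varphi}(x)=\operatorname{argmin}_y\{\varphi(y)+\frac{1}{2\lambda}\|x-y\|^2\}$, $\mathrm{env}_{\lambda\varphi}$ the Moreau envelope with $\nabla\mathrm{env}_{\lambda\varphi}(x)=(x-\mathrm{prox}_{\lambda\varphi}(x))/\lambda$, and $F^\lambda_{\mathrm{nor}}(z)=\nabla f(\mathrm{prox}_{\lambda\varphi}(z))+\frac1\lambda(z-\mathrm{prox}_{\lambda\varphi}(z))$. Method: on a filtered probability space $(\Omega,\mathcal F,\{\mathcal F_k\}_k,\mathbb P)$, with $\lambda>0$, step sizes $\alpha_k>0$, deterministic $z^0$, $x^0=\mathrm{prox}_{\lambda\varphi}(z^0)$, and $\mathcal F_{k+1}$-measurable random vectors $g^k$, set $z^{k+1}=z^k-\alpha_k(g^k+\nabla\mathrm{env}_{\lambda\varphi}(z^k))$, $x^{k+1}=\mathrm{prox}_{\lambda\varphi}(z^{k+1})$. Let $e^k=g^k-\nabla f(x^k)$. $L(\omega)=\sup_{\bar x\in\mathrm{cl}(\mathrm{conv}\{x^k(\omega)\}_k)}\mathrm{lip}\,\nabla f(\bar x)$ with $\mathrm{lip}\,\nabla f(\bar x)=\limsup_{x,x'\to\bar x,\,x\ne x'}\|\nabla f(x)-\nabla f(x')\|/\|x-x'\|$.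 $\tau_{m,n}=\sum_{i=m}^{n-1}\alpha_i$ and $e^{m,n}=-\sum_{i=m}^{n-1}\alpha_i[F^\lambda_{\mathrm{nor}}(z^i)-F^\lambda_{\mathrm{nor}}(z^m)]-\sum_{i=m}^{n-1}\alpha_ie^i$. *)

theory Defs
  imports "HOL-Analysis.Analysis"
begin

definition proper_fun :: "('a \<Rightarrow> ereal) \<Rightarrow> bool" where
  "proper_fun \<phi> \<longleftrightarrow> (\<forall>x. \<phi> x \<noteq> -\<infinity>) \<and> (\<exists>x. \<phi> x \<noteq> \<infinity>)"

definition convex_ereal_fun :: "('a::real_vector \<Rightarrow> ereal) \<Rightarrow> bool" where
  "convex_ereal_fun \<phi> \<longleftrightarrow>
     (\<forall>x y (t::real). 0 \<le> t \<and> t \<le> 1 \<longrightarrow>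
        \<phi> ((1 - t) *\<^sub>R x + t *\<^sub>R y) \<le> ereal (1 - t) * \<phi> x + ereal t * \<phi> y)"

definition lsc_fun :: "('a::topological_space \<Rightarrow> ereal) \<Rightarrow> bool" where
  "lsc_fun \<phi> \<longleftrightarrow> (\<forall>x. \<phi> x \<le> Liminf (at x) \<phi>)"

definition edom :: "('a \<Rightarrow> ereal) \<Rightarrow> 'a set" where
  "edom \<phi> = {x. \<phi> x < \<infinity>}"

text \<open>Proximal operator: the (unique, for proper lsc convex phi) minimiser.\<close>
definition prox :: "real \<Rightarrow> ('a::real_normed_vector \<Rightarrow> ereal) \<Rightarrow> 'a \<Rightarrow> 'a" where
  "prox lam \<phi> x = (SOME y. \<forall>y'. \<phi> y + ereal (norm (x - y)^2 / (2 * lam))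
                                 \<le> \<phi> y' + ereal (norm (x - y')^2 / (2 * lam)))"

definition grad_env :: "real \<Rightarrow> ('a::real_normed_vector \<Rightarrow> ereal) \<Rightarrow> 'a \<Rightarrow> 'a" where
  "grad_env lam \<phi> x = (1 / lam) *\<^sub>R (x - prox lam \<phi> x)"

definition Fnor :: "('a \<Rightarrow> 'a) \<Rightarrow> real \<Rightarrow> ('a::real_normed_vector \<Rightarrow> ereal) \<Rightarrow> 'a \<Rightarrow> 'a" where
  "Fnor gf lam \<phi> z = gf (prox lam \<phi> z) + (1 / lam) *\<^sub>R (z - prox lam \<phi> z)"

definition lipmod :: "('a::real_normed_vector \<Rightarrow> 'b::real_normed_vector) \<Rightarrow> 'a \<Rightarrow> ereal" where
  "lipmod G xb = Limsup (at (xb, xb) within {p. fst p \<noteq> snd p})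
      (\<lambda>p. ereal (norm (G (fst p) - G (snd p)) / norm (fst p - snd p)))"

definition Lconst :: "('a::real_normed_vector \<Rightarrow> 'a) \<Rightarrow> (nat \<Rightarrow> 'a) \<Rightarrow> ereal" where
  "Lconst G x = (SUP xb \<in> closure (convex hull (range x)). lipmod G xb)"

end

theory Submission
  imports Defs
begin

lemma local_lip:
  fixes G :: "'a::real_normed_vector \<Rightarrow> 'b::real_normed_vector"
  assumes "lipmod G p < ereal c"
  shows "\<exists>r>0. \<forall>q\<in>ball p r. \<forall>q'\<in>ball p r. norm (G q - G q') \<le> c * norm (q - q')"
proof -
  have "eventually (\<lambda>pp. ereal (norm (G (fst pp) - G (snd pp)) / norm (fst pp - snd pp)) < ereal c)
          (at (p, p) within {pp. fst pp \<noteq> snd pp})"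
    using assms unfolding lipmod_def by (rule Limsup_lessD)
  then obtain d where d: "d > 0" and H: "\<And>pp. pp \<in> {pp. fst pp \<noteq> snd pp} \<Longrightarrow> pp \<noteq> (p,p) \<Longrightarrow> dist pp (p,p) < d \<Longrightarrow>
      ereal (norm (G (fst pp) - G (snd pp)) / norm (fst pp - snd pp)) < ereal c"
    unfolding eventually_at by blast
  show ?thesis
  proof (intro exI[of _ "d/2"] conjI ballI)
    show "d/2 > 0" using d by simp
    fix q q' assume q: "q \<in> ball p (d/2)" and q': "q' \<in> ball p (d/2)"
    show "norm (G q - G q') \<le> c * norm (q - q')"
    proof (cases "q = q'")
      case True then show ?thesis by simp
    next
      case False
      have "dist (q, q') (p, p) = sqrt ((dist q p)^2 + (dist q' p)^2)" by (simp add: dist_Pair_Pair)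
      also have "\<dots> \<le> \<bar>dist q p\<bar> + \<bar>dist q' p\<bar>" by (rule sqrt_sum_squares_le_sum_abs)
      also have "\<dots> < d" using q q' by (simp add: dist_commute)
      finally have "dist (q, q') (p, p) < d" .
      then have "norm (G q - G q') / norm (q - q') < c" using H[of "(q,q')"] False by auto
      moreover have "norm (q - q') > 0" using False by simp
      ultimately show ?thesis by (simp add: divide_less_eq)
    qed
  qed
qed

lemma seg_lip:
  fixes G :: "'a::real_normed_vector \<Rightarrow> 'b::real_normed_vector"
  assumes "\<And>p. p \<in> closed_segment a b \<Longrightarrow> \<exists>r>0. \<forall>q\<in>ball p r. \<forall>q'\<in>ball p r. norm (G q - G q') \<le> c * norm (q - q')"
  shows "norm (G b - G a) \<le> c * norm (b - a)"
proof -
  obtain R where R: "\<And>p. p \<in> closed_segment a b \<Longrightarrow> R p > 0 \<and> (\<forall>q\<in>ball p (R p). \<forall>q'\<in>ball p (R p). norm (G q - G q') \<le> c * norm (q - q'))"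
  proof -
    have "\<forall>p\<in>closed_segment a b. \<exists>r. r > 0 \<and> (\<forall>q\<in>ball p r. \<forall>q'\<in>ball p r. norm (G q - G q') \<le> c * norm (q - q'))"
      using assms by blast
    then obtain f where "\<forall>p\<in>closed_segment a b. f p > 0 \<and> (\<forall>q\<in>ball p (f p). \<forall>q'\<in>ball p (f p). norm (G q - G q') \<le> c * norm (q - q'))"
      by (rule bchoice[THEN exE])
    then show ?thesis using that by blast
  qed
  have cov: "closed_segment a b \<subseteq> \<Union> ((\<lambda>p. ball p (R p)) ` closed_segment a b)"
  proof
    fix p assume "p \<in> closed_segment a b"
    then have "p \<in> ball p (R p)" using R[OF \<open>p \<in> closed_segment a b\<close>] by simp
    then show "p \<in> \<Union> ((\<lambda>p. ball p (R p)) ` closed_segment a b)" using \<open>p \<in> closed_segment a b\<close> by blast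
  qed
  have opn: "\<And>B. B \<in> (\<lambda>p. ball p (R p)) ` closed_segment a b \<Longrightarrow> open B" by auto
  obtain \<delta> where \<delta>: "\<delta> > 0" and HB: "\<And>y. y \<in> closed_segment a b \<Longrightarrow> \<exists>B \<in> (\<lambda>p. ball p (R p)) ` closed_segment a b. ball y \<delta> \<subseteq> B"
    using Heine_Borel_lemma[OF compact_segment cov opn] by blast
  obtain N :: nat where N: "norm (b - a) / \<delta> < N" using reals_Archimedean2 by blast
  have Npos: "N > 0"
  proof (rule ccontr)
    assume "\<not> N > 0"
    then have "N = 0" by simp
    with N have "norm (b - a) / \<delta> < 0" by simp
    moreover have "norm (b - a) / \<delta> \<ge> 0" using \<delta> by simp
    ultimately show False by linarith
  qed
  define y where "y k = a + (real k / real N) *\<^sub>R (b - a)" for k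
  have yseg: "y k \<in> closed_segment a b" if "k \<le> N" for k
  proof -
    have "y k = (1 - real k / real N) *\<^sub>R a + (real k / real N) *\<^sub>R b" by (simp add: y_def algebra_simps)
    moreover have "0 \<le> real k / real N" "real k / real N \<le> 1" using that Npos by auto
    ultimately show ?thesis unfolding in_segment by blast
  qed
  have ydiff: "y (Suc k) - y k = (1 / real N) *\<^sub>R (b - a)" for k
  proof -
    have "y (Suc k) - y k = (real (Suc k) / real N - real k / real N) *\<^sub>R (b - a)"
      by (simp add: y_def scaleR_diff_left)
    moreover have "real (Suc k) / real N - real k / real N = 1 / real N"
      by (simp add: diff_divide_distrib[symmetric])
    ultimately show ?thesis by simp
  qed
  have step: "norm (G (y (Suc k)) - G (y k)) \<le> c * (norm (b - a) / real N)" if kN: "k < N" for k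
  proof -
    obtain p where p: "p \<in> closed_segment a b" and sub: "ball (y k) \<delta> \<subseteq> ball p (R p)"
      using HB[OF yseg[of k]] kN by auto
    have "dist (y k) (y (Suc k)) = norm (b - a) / real N"
    proof -
      have "dist (y k) (y (Suc k)) = norm (y (Suc k) - y k)" by (simp add: dist_norm norm_minus_commute)
      also have "\<dots> = norm ((1 / real N) *\<^sub>R (b - a))" using ydiff[of k] by simp
      also have "\<dots> = norm (b - a) / real N" by simp
      finally show ?thesis .
    qed
    also have "\<dots> < \<delta>" using N \<delta> Npos by (simp add: divide_less_eq mult.commute)
    finally have "y (Suc k) \<in> ball (y k) \<delta>" by simp
    moreover have "y k \<in> ball (y k) \<delta>" using \<delta> by simp
    ultimately have "norm (G (y (Suc k)) - G (y k)) \<le> c * norm (y (Suc k) - y k)"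
      using R[OF p] sub by blast
    then show ?thesis using ydiff[of k] by simp
  qed
  have "G b - G a = (\<Sum>k<N. G (y (Suc k)) - G (y k))"
    using Npos by (subst sum_lessThan_telescope) (simp add: y_def)
  then have "norm (G b - G a) \<le> (\<Sum>k<N. norm (G (y (Suc k)) - G (y k)))"
    by (simp add: norm_sum)
  also have "\<dots> \<le> (\<Sum>k<N. c * (norm (b - a) / real N))"
    by (rule sum_mono) (use step in auto)
  also have "\<dots> = c * norm (b - a)" using Npos by simp
  finally show ?thesis .
qed


lemma norm_expand:
  fixes A B C D :: "'a::real_inner"
  assumes "l \<noteq> 0"
  shows "norm (s *\<^sub>R A + B - (1/l) *\<^sub>R C + (1/l) *\<^sub>R D)^2
    = s^2 * norm A^2 + norm B^2 - (2/l) * (B \<bullet> C) + (1/l^2) * norm C^2 + (1/l^2) * norm D^2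
      + (2/l) * s * (A \<bullet> (l *\<^sub>R B - C + D)) + (2/l) * (B \<bullet> D) - (2/l^2) * (D \<bullet> C)"
  using assms
  unfolding power2_norm_eq_inner
  by (simp add: inner_add_left inner_add_right inner_diff_left inner_diff_right
      inner_commute power2_eq_square field_simps)

theorem lemma2p9:
  fixes \<phi> :: "'a::euclidean_space \<Rightarrow> ereal"
    and f :: "'a \<Rightarrow> real" and gradf :: "'a \<Rightarrow> 'a" and U :: "'a set"
    and lam :: "real" and \<alpha> :: "nat \<Rightarrow> real" and z0 :: "'a"
    and g :: "nat \<Rightarrow> 'w \<Rightarrow> 'a"
    and z x :: "nat \<Rightarrow> 'w \<Rightarrow> 'a"
    and \<omega> :: 'w and m n :: nat
  assumes phi_proper: "proper_fun \<phi>"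
    and phi_convex: "convex_ereal_fun \<phi>"
    and phi_lsc: "lsc_fun \<phi>"
    and U_open: "open U" and dom_sub: "edom \<phi> \<subseteq> U"
    and f_grad: "\<And>y. y \<in> U \<Longrightarrow> (f has_derivative (\<lambda>h. gradf y \<bullet> h)) (at y)"
    and gradf_cont: "continuous_on U gradf"
    and lam_pos: "lam > 0"
    and alpha_pos: "\<And>k. \<alpha> k > 0"
    and z_0: "\<And>w. z 0 w = z0"
    and z_step: "\<And>k w. z (Suc k) w = z k w - \<alpha> k *\<^sub>R (g k w + grad_env lam \<phi> (z k w))"
    and x_def: "\<And>k w. x k w = prox lam \<phi> (z k w)"
    and mn: "m < n"
    and L_fin: "Lconst gradf (\<lambda>k. x k \<omega>) < \<infinity>"
  shows
    "let L = real_of_ereal (Lconst gradf (\<lambda>k. x k \<omega>));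
         F = Fnor gradf lam \<phi>;
         \<tau> = (\<Sum>i=m..<n. \<alpha> i);
         ee = (\<lambda>i. g i \<omega> - gradf (x i \<omega>));
         e = - (\<Sum>i=m..<n. \<alpha> i *\<^sub>R (F (z i \<omega>) - F (z m \<omega>)))
             - (\<Sum>i=m..<n. \<alpha> i *\<^sub>R ee i);
         dx = x n \<omega> - x m \<omega>;
         dg = gradf (x n \<omega>) - gradf (x m \<omega>)
     in norm (F (z n \<omega>))^2
        \<le> (1 - \<tau> / lam)^2 * norm (F (z m \<omega>))^2
          + (L^2 + 2 * L / lam + 1 / lam^2) * norm dx ^2
          + (1 / lam^2) * norm e ^2
          + (2 / lam) * (1 - \<tau> / lam) * (F (z m \<omega>) \<bullet> (lam *\<^sub>R dg - dx + e))
          + (2 / lam) * (dg \<bullet> e)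
          - (2 / lam^2) * (e \<bullet> dx)"
proof -
  define L where "L = real_of_ereal (Lconst gradf (\<lambda>k. x k \<omega>))"
  define F where "F = Fnor gradf lam \<phi>"
  define \<tau> where "\<tau> = (\<Sum>i=m..<n. \<alpha> i)"
  define ee where "ee = (\<lambda>i. g i \<omega> - gradf (x i \<omega>))"
  define e where "e = - (\<Sum>i=m..<n. \<alpha> i *\<^sub>R (F (z i \<omega>) - F (z m \<omega>))) - (\<Sum>i=m..<n. \<alpha> i *\<^sub>R ee i)"
  define dx where "dx = x n \<omega> - x m \<omega>"
  define dg where "dg = gradf (x n \<omega>) - gradf (x m \<omega>)"
  have lam0: "lam \<noteq> 0" using lam_pos by simp
  have Fk: "F (z k \<omega>) = gradf (x k \<omega>) + (1/lam) *\<^sub>R (z k \<omega> - x k \<omega>)" for k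
    by (simp add: F_def Fnor_def x_def)
  have zs: "z (Suc k) \<omega> = z k \<omega> - \<alpha> k *\<^sub>R (F (z k \<omega>) + ee k)" for k
    using z_step[of k \<omega>] by (simp add: Fk ee_def grad_env_def x_def[symmetric] algebra_simps)
  have zsum: "z (m + d) \<omega> = z m \<omega> - (\<Sum>i=m..<m+d. \<alpha> i *\<^sub>R (F (z i \<omega>) + ee i))" for d
  proof (induction d)
    case 0 then show ?case by simp
  next
    case (Suc d)
    have "z (m + Suc d) \<omega> = z (m + d) \<omega> - \<alpha> (m+d) *\<^sub>R (F (z (m+d) \<omega>) + ee (m+d))"
      using zs[of "m+d"] by simp
    also have "\<dots> = z m \<omega> - (\<Sum>i=m..<m + Suc d. \<alpha> i *\<^sub>R (F (z i \<omega>) + ee i))"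
      using Suc by simp
    finally show ?case .
  qed
  have zn: "z n \<omega> = z m \<omega> - \<tau> *\<^sub>R F (z m \<omega>) + e"
  proof -
    have "z n \<omega> = z m \<omega> - (\<Sum>i=m..<n. \<alpha> i *\<^sub>R (F (z i \<omega>) + ee i))"
      using zsum[of "n - m"] mn by simp
    moreover have "e = - (\<Sum>i=m..<n. \<alpha> i *\<^sub>R (F (z i \<omega>) + ee i)) + \<tau> *\<^sub>R F (z m \<omega>)"
      unfolding e_def \<tau>_def
      by (simp add: scaleR_diff_right scaleR_add_right sum.distrib sum_subtractf scaleR_sum_left algebra_simps)
    ultimately show ?thesis by simp
  qed
  define Fm where "Fm = F (z m \<omega>)"
  have zm: "z m \<omega> = lam *\<^sub>R (Fm - gradf (x m \<omega>)) + x m \<omega>"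
  proof -
    have "lam *\<^sub>R F (z m \<omega>) = lam *\<^sub>R gradf (x m \<omega>) + (z m \<omega> - x m \<omega>)"
      using Fk[of m] lam0 by (simp add: scaleR_add_right)
    then show ?thesis unfolding Fm_def by (simp add: algebra_simps)
  qed
  have zn': "z n \<omega> = z m \<omega> - \<tau> *\<^sub>R Fm + e" using zn unfolding Fm_def .
  have Fn: "F (z n \<omega>) = (1 - \<tau>/lam) *\<^sub>R Fm + dg - (1/lam) *\<^sub>R dx + (1/lam) *\<^sub>R e"
  proof -
    have "F (z n \<omega>) = gradf (x n \<omega>) + (1/lam) *\<^sub>R (z n \<omega> - x n \<omega>)" by (rule Fk)
    also have "\<dots> = gradf (x n \<omega>) + (1/lam) *\<^sub>R (lam *\<^sub>R (Fm - gradf (x m \<omega>)) + x m \<omega> - \<tau> *\<^sub>R Fm + e - x n \<omega>)"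
      by (simp only: zn' zm[symmetric])
    also have "\<dots> = (1 - \<tau>/lam) *\<^sub>R Fm + dg - (1/lam) *\<^sub>R dx + (1/lam) *\<^sub>R e"
      unfolding dg_def dx_def using lam0 by (simp add: algebra_simps scaleR_diff_left)
    finally show ?thesis .
  qed
  have Lle: "Lconst gradf (\<lambda>k. x k \<omega>) \<le> ereal L"
    using L_fin unfolding L_def by (cases "Lconst gradf (\<lambda>k. x k \<omega>)") auto
  have seg_sub: "closed_segment (x m \<omega>) (x n \<omega>) \<subseteq> closure (convex hull (range (\<lambda>k. x k \<omega>)))"
  proof -
    have "closed_segment (x m \<omega>) (x n \<omega>) = convex hull {x m \<omega>, x n \<omega>}" by (rule segment_convex_hull)
    also have "\<dots> \<subseteq> convex hull (range (\<lambda>k. x k \<omega>))" by (rule hull_mono) auto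
    also have "\<dots> \<subseteq> closure (convex hull (range (\<lambda>k. x k \<omega>)))" by (rule closure_subset)
    finally show ?thesis .
  qed
  have lipeps: "norm dg \<le> (L + \<epsilon>) * norm dx" if eps: "\<epsilon> > 0" for \<epsilon>
  proof -
    have "norm (gradf (x n \<omega>) - gradf (x m \<omega>)) \<le> (L + \<epsilon>) * norm (x n \<omega> - x m \<omega>)"
    proof (rule seg_lip)
      fix p assume p: "p \<in> closed_segment (x m \<omega>) (x n \<omega>)"
      have "lipmod gradf p \<le> Lconst gradf (\<lambda>k. x k \<omega>)"
        unfolding Lconst_def using p seg_sub by (intro SUP_upper) auto
      also have "\<dots> \<le> ereal L" by (rule Lle)
      also have "\<dots> < ereal (L + \<epsilon>)" using eps by simp
      finally show "\<exists>r>0. \<forall>q\<in>ball p r. \<forall>q'\<in>ball p r. norm (gradf q - gradf q') \<le> (L + \<epsilon>) * norm (q - q')"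
        by (rule local_lip)
    qed
    then show ?thesis unfolding dg_def dx_def .
  qed
  have lip: "norm dg \<le> L * norm dx"
  proof (rule field_le_epsilon)
    fix \<epsilon> :: real assume eps: "\<epsilon> > 0"
    define \<epsilon>' where "\<epsilon>' = \<epsilon> / (norm dx + 1)"
    have np: "norm dx + 1 > 0" using norm_ge_zero[of dx] by linarith
    have e'pos: "\<epsilon>' > 0" using eps np unfolding \<epsilon>'_def by (rule divide_pos_pos)
    have "\<epsilon>' * norm dx \<le> \<epsilon>"
    proof -
      have "\<epsilon>' * norm dx \<le> \<epsilon>' * (norm dx + 1)" using e'pos by simp
      also have "\<dots> = \<epsilon>" unfolding \<epsilon>'_def using np by simp
      finally show ?thesis .
    qed
    then show "norm dg \<le> L * norm dx + \<epsilon>" using lipeps[OF e'pos] by (simp add: algebra_simps)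
  qed
  have sq: "norm dg ^ 2 \<le> L^2 * norm dx ^ 2"
  proof -
    have "norm dg ^ 2 \<le> (L * norm dx) ^ 2" using lip by (intro power_mono) auto
    then show ?thesis by (simp add: power_mult_distrib)
  qed
  have cs: "- (dg \<bullet> dx) \<le> L * norm dx ^ 2"
  proof -
    have "- (dg \<bullet> dx) \<le> norm dg * norm dx" using norm_cauchy_schwarz[of "- dg" dx] by simp
    also have "\<dots> \<le> L * norm dx * norm dx" using lip by (intro mult_right_mono) auto
    finally show ?thesis by (simp add: power2_eq_square mult.assoc)
  qed
  have key: "norm dg ^ 2 - (2/lam) * (dg \<bullet> dx) \<le> (L^2 + 2 * L / lam) * norm dx ^ 2"
  proof -
    have "(2/lam) * (- (dg \<bullet> dx)) \<le> (2/lam) * (L * norm dx ^ 2)"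
      using cs lam_pos by (intro mult_left_mono) auto
    then show ?thesis using sq by (simp add: algebra_simps)
  qed
  have eq: "norm (F (z n \<omega>))^2 = (1 - \<tau>/lam)^2 * norm Fm^2 + norm dg^2 - (2/lam) * (dg \<bullet> dx)
      + (1/lam^2) * norm dx^2 + (1/lam^2) * norm e^2
      + (2/lam) * (1 - \<tau>/lam) * (Fm \<bullet> (lam *\<^sub>R dg - dx + e)) + (2/lam) * (dg \<bullet> e) - (2/lam^2) * (e \<bullet> dx)"
    unfolding Fn by (rule norm_expand[OF lam0])
  have final: "norm (F (z n \<omega>))^2
        \<le> (1 - \<tau> / lam)^2 * norm Fm^2
          + (L^2 + 2 * L / lam + 1 / lam^2) * norm dx ^2
          + (1 / lam^2) * norm e ^2
          + (2 / lam) * (1 - \<tau> / lam) * (Fm \<bullet> (lam *\<^sub>R dg - dx + e))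
          + (2 / lam) * (dg \<bullet> e)
          - (2 / lam^2) * (e \<bullet> dx)"
    unfolding eq using key by (simp add: algebra_simps)
  show ?thesis
    unfolding Let_def
    using final unfolding L_def F_def \<tau>_def ee_def e_def dx_def dg_def Fm_def .

qed

end
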